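(* Let $X=\{X(t)\}_{t\in[0,1]}$ be a centered second-order stochastic process with trajectories in $L^2[0,1]$ which is sample-continuous (all trajectories are continuous functions). Let $\Theta=\bigcup_{p\ge1}\Theta_p$ with $\Theta_p=\mathbb{R}^p\times[0,1]^p\times\mathbb{R}\times\mathbb{R}^+_0$, generic element $\theta=(\beta_1,\dots,\beta_p,t_1,\dots,t_p,\alpha_0,\sigma^2)$, equipped with the metric $d(\theta,\theta')=\min\{\|\theta-\theta'\|,1\}$ if $\theta,\theta'$ lie in the same $\Theta_p$ and $1$ otherwise, and its Borel $\sigma$-algebra. For $\theta\in\Theta_p$ let $P_\theta$ be the distribution on $L^2[0,1]\times\mathbb{R}$ of $(X,Y)$, where $X$ has the law of the process and $Y\mid X\sim\mathcal N(\alpha_0+\sum_{j=1}^p\beta_jX(t_j),\sigma^2)$. Then the map $\theta\mapsto P_\theta(A)$ is measurable for every measurable set $A\subseteq L^2[0,1]\times\mathbb{R}$. *)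

theory Defs
  imports "HOL-Probability.Probability"
begin

text \<open>Parameters theta = (beta_1..beta_p, t_1..t_p, alpha_0, sigma^2), represented as
  (list of betas, list of t's, alpha0, sigma2).\<close>
type_synonym theta = "real list \<times> real list \<times> real \<times> real"

definition ThetaSet :: "theta set" where
  "ThetaSet = {(b, t, a, s). length b = length t \<and> 1 \<le> length b \<and> set t \<subseteq> {0..1} \<and> 0 \<le> s}"

definition theta_dist :: "theta \<Rightarrow> theta \<Rightarrow> real" where
  "theta_dist th th' = (case th of (b, t, a, s) \<Rightarrow> case th' of (b', t', a', s') \<Rightarrow>
     if length b = length b'
     then min (sqrt ((\<Sum>j<length b. (b!j - b'!j)^2) + (\<Sum>j<length t. (t!j - t'!j)^2)
                     + (a - a')^2 + (s - s')^2)) 1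
     else 1)"

definition pm_opens :: "'x set \<Rightarrow> ('x \<Rightarrow> 'x \<Rightarrow> real) \<Rightarrow> 'x set set" where
  "pm_opens S d = {U. U \<subseteq> S \<and> (\<forall>x\<in>U. \<exists>e>0. \<forall>y\<in>S. d x y < e \<longrightarrow> y \<in> U)}"

definition Theta_M :: "theta measure" where
  "Theta_M = sigma ThetaSet (pm_opens ThetaSet theta_dist)"

text \<open>L^2[0,1]: square-integrable functions on [0,1] (values outside [0,1] ignored),
  with the L^2 pseudometric and its Borel sigma-algebra.\<close>
definition L2set :: "(real \<Rightarrow> real) set" where
  "L2set = {f. (\<lambda>x. indicator {0..1} x * f x) \<in> borel_measurable lborel \<and>
               integrable lborel (\<lambda>x. indicator {0..1} x * (f x)^2)}"

definition L2_dist :: "(real \<Rightarrow> real) \<Rightarrow> (real \<Rightarrow> real) \<Rightarrow> real" where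
  "L2_dist f g = sqrt (\<integral>x. indicator {0..1} x * (f x - g x)^2 \<partial>lborel)"

definition L2M :: "(real \<Rightarrow> real) measure" where
  "L2M = sigma L2set (pm_opens L2set L2_dist)"

definition gauss :: "real \<Rightarrow> real \<Rightarrow> real measure" where
  "gauss m s2 = (if s2 = 0 then return borel m else density lborel (normal_density m (sqrt s2)))"

definition reg_mean :: "theta \<Rightarrow> (real \<Rightarrow> real) \<Rightarrow> real" where
  "reg_mean th f = (case th of (b, t, a, s) \<Rightarrow> a + (\<Sum>j<length b. b!j * f (t!j)))"

definition theta_s2 :: "theta \<Rightarrow> real" where
  "theta_s2 th = snd (snd (snd th))"

definition P_theta :: "'w measure \<Rightarrow> ('w \<Rightarrow> real \<Rightarrow> real) \<Rightarrow> theta \<Rightarrow> ((real \<Rightarrow> real) \<times> real) measure" where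
  "P_theta M X th = M \<bind> (\<lambda>w. distr (gauss (reg_mean th (X w)) (theta_s2 th)) (L2M \<Otimes>\<^sub>M borel) (\<lambda>y. (X w, y)))"

end

theory Submission imports Defs begin

lemma gauss_affine:
  assumes "0 \<le> s2"
  shows "gauss m s2 = distr (density lborel (normal_density 0 1)) borel (\<lambda>z. m + sqrt s2 * z)"
proof (cases "s2 = 0")
  case True
  interpret P: prob_space "density lborel (normal_density 0 1)" using real_dist_normal_dist by (simp add: real_distribution_def)
  show ?thesis
  proof (rule measure_eqI)
    fix B assume "B \<in> sets (gauss m s2)"
    then have B: "B \<in> sets borel" using True by (simp add: gauss_def)
    have "emeasure (distr (density lborel (normal_density 0 1)) borel (\<lambda>z. m + sqrt s2 * z)) B
       = emeasure (density lborel (normal_density 0 1)) ((\<lambda>z. m) -` B \<inter> space (density lborel (normal_density 0 1)))"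
      using True B by (subst emeasure_distr) auto
    also have "\<dots> = indicator B m"
      using P.emeasure_space_1 by (cases "m \<in> B") auto
    finally show "emeasure (gauss m s2) B = emeasure (distr (density lborel (normal_density 0 1)) borel (\<lambda>z. m + sqrt s2 * z)) B"
      using True B by (simp add: gauss_def)
  qed (simp add: gauss_def True)
next
  case False
  then have pos: "0 < sqrt s2" using assms by simp
  interpret P: prob_space "density lborel (normal_density 0 1)" using real_dist_normal_dist by (simp add: real_distribution_def)
  have d: "distributed (density lborel (normal_density 0 1)) lborel (\<lambda>x. x) (normal_density 0 1)"
    unfolding distributed_def by (simp add: distr_id2)
  have "distributed (density lborel (normal_density 0 1)) lborel (\<lambda>x. m + sqrt s2 * x)
          (normal_density (m + sqrt s2 * 0) (\<bar>sqrt s2\<bar> * 1))"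
    by (rule P.normal_density_affine[OF d]) (use pos in auto)
  then have "distr (density lborel (normal_density 0 1)) lborel (\<lambda>x. m + sqrt s2 * x) = density lborel (normal_density m (sqrt s2))"
    using pos unfolding distributed_def by simp
  moreover have "distr (density lborel (normal_density 0 1)) borel (\<lambda>x. m + sqrt s2 * x) = distr (density lborel (normal_density 0 1)) lborel (\<lambda>x. m + sqrt s2 * x)"
    by (rule distr_cong) auto
  ultimately show ?thesis using False by (simp add: gauss_def)
qed

definition lenT :: "theta \<Rightarrow> nat" where "lenT th = length (fst th)"
definition Bc :: "nat \<Rightarrow> theta \<Rightarrow> real" where
  "Bc j th = (if j < length (fst th) then fst th ! j else 0)"
definition Tc :: "nat \<Rightarrow> theta \<Rightarrow> real" where
  "Tc j th = (if j < length (fst (snd th)) then fst (snd th) ! j else 0)"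
definition Ac :: "theta \<Rightarrow> real" where "Ac th = fst (snd (snd th))"

lemma space_Theta_M[simp]: "space Theta_M = ThetaSet"
  unfolding Theta_M_def by (simp add: space_measure_of_conv)

lemma sets_Theta_M: "sets Theta_M = sigma_sets ThetaSet (pm_opens ThetaSet theta_dist)"
  unfolding Theta_M_def by (rule sets_measure_of) (auto simp: pm_opens_def)

lemma open_in_Theta:
  assumes "U \<subseteq> ThetaSet" "\<And>x. x \<in> U \<Longrightarrow> \<exists>e>0. \<forall>y\<in>ThetaSet. theta_dist x y < e \<longrightarrow> y \<in> U"
  shows "U \<in> sets Theta_M"
  unfolding sets_Theta_M using assms by (intro sigma_sets.Basic) (auto simp: pm_opens_def)

lemma theta_cont_meas:
  fixes \<phi> :: "theta \<Rightarrow> real"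
  assumes "\<And>x e. x \<in> ThetaSet \<Longrightarrow> e > 0 \<Longrightarrow> \<exists>d>0. \<forall>y\<in>ThetaSet. theta_dist x y < d \<longrightarrow> \<bar>\<phi> x - \<phi> y\<bar> < e"
  shows "\<phi> \<in> borel_measurable Theta_M"
  unfolding borel_measurable_iff_less
proof
  fix a
  show "{w \<in> space Theta_M. \<phi> w < a} \<in> sets Theta_M"
  proof (rule open_in_Theta)
    fix x assume x: "x \<in> {w \<in> space Theta_M. \<phi> w < a}"
    then have x1: "x \<in> ThetaSet" "\<phi> x < a" by auto
    then have xx: "x \<in> ThetaSet" "a - \<phi> x > 0" by (auto simp: algebra_simps)
    obtain d where d: "d > 0" "\<forall>y\<in>ThetaSet. theta_dist x y < d \<longrightarrow> \<bar>\<phi> x - \<phi> y\<bar> < a - \<phi> x"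
      using assms[OF xx] by blast
    show "\<exists>e>0. \<forall>y\<in>ThetaSet. theta_dist x y < e \<longrightarrow> y \<in> {w \<in> space Theta_M. \<phi> w < a}"
      using d by (intro exI[of _ d]) auto
  qed auto
qed

lemma sqrt_bound: "(v::real)^2 \<le> S \<Longrightarrow> \<bar>v\<bar> \<le> sqrt S"
  using real_sqrt_le_mono[of "v^2" S] by simp

lemma theta_coords:
  assumes x: "x \<in> ThetaSet" and y: "y \<in> ThetaSet" and d: "theta_dist x y < 1"
  shows "lenT x = lenT y" "\<bar>Bc j x - Bc j y\<bar> \<le> theta_dist x y" "\<bar>Tc j x - Tc j y\<bar> \<le> theta_dist x y"
    "\<bar>Ac x - Ac y\<bar> \<le> theta_dist x y" "\<bar>theta_s2 x - theta_s2 y\<bar> \<le> theta_dist x y"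
proof -
  obtain b t a s where xe: "x = (b, t, a, s)" by (cases x) auto
  obtain b' t' a' s' where ye: "y = (b', t', a', s')" by (cases y) auto
  have lt: "length t = length b" "length t' = length b'" using x y xe ye by (auto simp: ThetaSet_def)
  define S where "S = (\<Sum>j<length b. (b!j - b'!j)^2) + (\<Sum>j<length t. (t!j - t'!j)^2) + (a - a')^2 + (s - s')^2"
  have leq: "length b = length b'"
    using d by (rule contrapos_pp) (simp add: theta_dist_def xe ye)
  have dS: "theta_dist x y = sqrt S"
    using d leq by (simp add: theta_dist_def xe ye S_def min_def split: if_splits)
  have s0: "(a - a')^2 \<ge> 0" "(s - s')^2 \<ge> 0" by auto
  have s1: "(\<Sum>j<length b. (b!j - b'!j)^2) \<ge> 0" "(\<Sum>j<length t. (t!j - t'!j)^2) \<ge> 0"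
    by (auto intro: sum_nonneg)
  have S0: "S \<ge> 0" using s1 s0 unfolding S_def by linarith
  show "lenT x = lenT y" using leq by (simp add: lenT_def xe ye)
  show "\<bar>Bc j x - Bc j y\<bar> \<le> theta_dist x y"
  proof (cases "j < length b")
    case True
    have "(b!j - b'!j)^2 \<le> (\<Sum>j<length b. (b!j - b'!j)^2)"
      using True by (intro member_le_sum) auto
    then have "(b!j - b'!j)^2 \<le> S" using s1 s0 unfolding S_def by linarith
    then show ?thesis using True leq by (simp add: Bc_def xe ye dS[unfolded xe ye] sqrt_bound)
  next
    case False then show ?thesis using leq S0 dS[unfolded xe ye] by (simp add: Bc_def xe ye)
  qed
  show "\<bar>Tc j x - Tc j y\<bar> \<le> theta_dist x y"
  proof (cases "j < length t")
    case True
    have "(t!j - t'!j)^2 \<le> (\<Sum>j<length t. (t!j - t'!j)^2)"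
      using True by (intro member_le_sum) auto
    then have "(t!j - t'!j)^2 \<le> S" using s1 s0 unfolding S_def by linarith
    then show ?thesis using True leq lt by (simp add: Tc_def xe ye dS[unfolded xe ye] sqrt_bound)
  next
    case False then show ?thesis using leq lt S0 dS[unfolded xe ye] by (simp add: Tc_def xe ye)
  qed
  have "(a - a')^2 \<le> S" "(s - s')^2 \<le> S" using s1 s0 unfolding S_def by auto
  then show "\<bar>Ac x - Ac y\<bar> \<le> theta_dist x y" "\<bar>theta_s2 x - theta_s2 y\<bar> \<le> theta_dist x y"
    by (auto simp: Ac_def theta_s2_def xe ye dS[unfolded xe ye] sqrt_bound)
qed

lemma lip_meas:
  fixes \<phi> :: "theta \<Rightarrow> real"
  assumes "\<And>x y. x \<in> ThetaSet \<Longrightarrow> y \<in> ThetaSet \<Longrightarrow> theta_dist x y < 1 \<Longrightarrow> \<bar>\<phi> x - \<phi> y\<bar> \<le> theta_dist x y"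
  shows "\<phi> \<in> borel_measurable Theta_M"
proof (rule theta_cont_meas)
  fix x e assume "x \<in> ThetaSet" "(e::real) > 0"
  then show "\<exists>d>0. \<forall>y\<in>ThetaSet. theta_dist x y < d \<longrightarrow> \<bar>\<phi> x - \<phi> y\<bar> < e"
  proof (intro exI[of _ "min e 1"] conjI ballI impI)
    fix y assume "y \<in> ThetaSet" "theta_dist x y < min e 1"
    then show "\<bar>\<phi> x - \<phi> y\<bar> < e" using assms[of x y] \<open>x \<in> ThetaSet\<close> by auto
  qed (use \<open>e > 0\<close> in auto)
qed

lemma Bc_meas[measurable]: "Bc j \<in> borel_measurable Theta_M"
  by (rule lip_meas) (rule theta_coords)
lemma Tc_meas[measurable]: "Tc j \<in> borel_measurable Theta_M"
  by (rule lip_meas) (rule theta_coords)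
lemma Ac_meas[measurable]: "Ac \<in> borel_measurable Theta_M"
  by (rule lip_meas) (rule theta_coords)
lemma s2_meas[measurable]: "theta_s2 \<in> borel_measurable Theta_M"
  by (rule lip_meas) (rule theta_coords)

lemma lenT_meas[measurable]: "lenT \<in> Theta_M \<rightarrow>\<^sub>M count_space UNIV"
proof (subst measurable_count_space_eq2_countable, safe)
  fix p :: nat
  show "lenT -` {p} \<inter> space Theta_M \<in> sets Theta_M"
  proof (rule open_in_Theta)
    fix x assume "x \<in> lenT -` {p} \<inter> space Theta_M"
    then have "x \<in> ThetaSet" "lenT x = p" by auto
    then show "\<exists>e>0. \<forall>y\<in>ThetaSet. theta_dist x y < e \<longrightarrow> y \<in> lenT -` {p} \<inter> space Theta_M"
      using theta_coords(1)[of x] by (intro exI[of _ 1]) auto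
  qed auto
qed auto

definition rn :: "nat \<Rightarrow> real \<Rightarrow> real" where
  "rn n x = real_of_int \<lfloor>real (Suc n) * x\<rfloor> / real (Suc n)"

lemma rn_bounds:
  assumes "x \<in> {0..1}"
  shows "rn n x \<in> {0..1}" "x - inverse (real (Suc n)) \<le> rn n x" "rn n x \<le> x"
proof -
  have p: "real (Suc n) > 0" by simp
  have a: "real_of_int \<lfloor>real (Suc n) * x\<rfloor> \<le> real (Suc n) * x" by (rule of_int_floor_le)
  have b: "real (Suc n) * x < real_of_int \<lfloor>real (Suc n) * x\<rfloor> + 1" by (rule real_of_int_floor_add_one_gt)
  have c: "0 \<le> \<lfloor>real (Suc n) * x\<rfloor>" using assms by simp
  show "rn n x \<le> x" using a p unfolding rn_def by (simp add: divide_le_eq mult.commute)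
  moreover have "rn n x \<ge> 0" using c unfolding rn_def by simp
  ultimately show "rn n x \<in> {0..1}" using assms by auto
  have "x - inverse (real (Suc n)) = (real (Suc n) * x - 1) / real (Suc n)"
    using p by (simp add: field_simps)
  also have "\<dots> \<le> rn n x" unfolding rn_def using b p
    by (intro divide_right_mono) auto
  finally show "x - inverse (real (Suc n)) \<le> rn n x" .
qed

lemma rn_tendsto:
  assumes "x \<in> {0..1}"
  shows "(\<lambda>n. rn n x) \<longlonglongrightarrow> x"
proof (rule tendsto_sandwich[of "\<lambda>n. x - inverse (real (Suc n))" _ _ "\<lambda>n. x"])
  show "\<forall>\<^sub>F n in sequentially. x - inverse (real (Suc n)) \<le> rn n x" using rn_bounds[OF assms] by simp
  show "\<forall>\<^sub>F n in sequentially. rn n x \<le> x" using rn_bounds[OF assms] by simp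
  show "(\<lambda>n. x - inverse (real (Suc n))) \<longlonglongrightarrow> x"
    using tendsto_diff[OF tendsto_const LIMSEQ_inverse_real_of_nat, of x] by simp
qed simp

lemma carath:
  fixes X :: "'w \<Rightarrow> real \<Rightarrow> real" and \<phi> :: "'n \<Rightarrow> real"
  assumes Xm: "\<And>t. t \<in> {0..1} \<Longrightarrow> (\<lambda>w. X w t) \<in> borel_measurable M"
    and cont: "\<And>w. w \<in> space M \<Longrightarrow> continuous_on {0..1} (X w)"
    and phim: "\<phi> \<in> borel_measurable N" and phir: "\<And>x. x \<in> space N \<Longrightarrow> \<phi> x \<in> {0..1}"
  shows "(\<lambda>p. X (snd p) (\<phi> (fst p))) \<in> borel_measurable (N \<Otimes>\<^sub>M M)"
proof (rule borel_measurable_LIMSEQ_real)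
  define cl :: "real \<Rightarrow> real" where "cl x = max 0 (min 1 x)" for x
  have clr: "cl x \<in> {0..1}" for x unfolding cl_def by auto
  let ?u = "\<lambda>n p. X (snd p) (cl (real_of_int \<lfloor>real (Suc n) * \<phi> (fst p)\<rfloor> / real (Suc n)))"
  show "?u n \<in> borel_measurable (N \<Otimes>\<^sub>M M)" for n
  proof (rule measurable_compose_countable'[where I=UNIV and
        f="\<lambda>i p. X (snd p) (cl (real_of_int i / real (Suc n)))"])
    fix i :: int
    show "(\<lambda>p. X (snd p) (cl (real_of_int i / real (Suc n)))) \<in> borel_measurable (N \<Otimes>\<^sub>M M)"
      by (rule measurable_compose[OF measurable_snd Xm[OF clr]])
  next
    show "(\<lambda>p. \<lfloor>real (Suc n) * \<phi> (fst p)\<rfloor>) \<in> N \<Otimes>\<^sub>M M \<rightarrow>\<^sub>M count_space UNIV"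
      using phim by measurable
  qed auto
  fix p assume p: "p \<in> space (N \<Otimes>\<^sub>M M)"
  then have p1: "\<phi> (fst p) \<in> {0..1}" and p2: "snd p \<in> space M"
    using phir by (auto simp: space_pair_measure)
  have eq: "cl (real_of_int \<lfloor>real (Suc n) * \<phi> (fst p)\<rfloor> / real (Suc n)) = rn n (\<phi> (fst p))" for n
    using rn_bounds(1)[OF p1, of n] unfolding cl_def rn_def by auto
  show "(\<lambda>n. ?u n p) \<longlonglongrightarrow> X (snd p) (\<phi> (fst p))"
    unfolding eq
    by (rule continuous_on_tendsto_compose[OF cont[OF p2] rn_tendsto[OF p1] p1])
       (use rn_bounds(1)[OF p1] in auto)
qed

lemma Tc_range: "x \<in> ThetaSet \<Longrightarrow> Tc j x \<in> {0..1}"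
proof -
  assume x: "x \<in> ThetaSet"
  show ?thesis
  proof (cases "j < length (fst (snd x))")
    case True
    then have "fst (snd x) ! j \<in> set (fst (snd x))" by (rule nth_mem)
    moreover have "set (fst (snd x)) \<subseteq> {0..1}" using x by (auto simp: ThetaSet_def)
    ultimately have "fst (snd x) ! j \<in> {0..1}" by blast
    then show ?thesis using True by (simp only: Tc_def if_True)
  qed (simp add: Tc_def)
qed

lemma reg_mean_eq:
  "th \<in> ThetaSet \<Longrightarrow> reg_mean th f = Ac th + (\<Sum>j<lenT th. Bc j th * f (Tc j th))"
  unfolding ThetaSet_def reg_mean_def Ac_def lenT_def Bc_def Tc_def
  by (auto intro!: sum.cong)

theorem proposition3:
  fixes M :: "'w measure" and X :: "'w \<Rightarrow> real \<Rightarrow> real"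
  assumes "prob_space M"
    and "\<And>t. t \<in> {0..1} \<Longrightarrow> (\<lambda>w. X w t) \<in> borel_measurable M"
    and "\<And>t. t \<in> {0..1} \<Longrightarrow> integrable M (\<lambda>w. (X w t)^2)"
    and "\<And>t. t \<in> {0..1} \<Longrightarrow> (\<integral>w. X w t \<partial>M) = 0"
    and "X \<in> M \<rightarrow>\<^sub>M L2M"
    and "\<And>w. w \<in> space M \<Longrightarrow> continuous_on {0..1} (X w)"
    and "A \<in> sets (L2M \<Otimes>\<^sub>M borel)"
  shows "(\<lambda>th. emeasure (P_theta M X th) A) \<in> borel_measurable Theta_M"
proof -
  interpret P: prob_space M by fact
  note Xm = assms(2) and cont = assms(6) and XL[measurable] = assms(5) and Aset = assms(7)
  define std where "std = density lborel (normal_density 0 1)"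
  have std_sub: "std \<in> space (subprob_algebra borel)"
    unfolding std_def using real_dist_normal_dist
    by (auto simp: space_subprob_algebra real_distribution_def prob_space_imp_subprob_space)
  define RM where "RM q = Ac (fst q) + (\<Sum>j<lenT (fst q). Bc j (fst q) * X (snd q) (Tc j (fst q)))"
    for q :: "theta \<times> 'w"
  have term_meas: "(\<lambda>q. X (snd q) (Tc j (fst q))) \<in> borel_measurable (Theta_M \<Otimes>\<^sub>M M)" for j
  proof (rule carath)
    show "\<And>t. t \<in> {0..1} \<Longrightarrow> (\<lambda>w. X w t) \<in> borel_measurable M" by (rule Xm)
    show "\<And>w. w \<in> space M \<Longrightarrow> continuous_on {0..1} (X w)" by (rule cont)
    show "Tc j \<in> borel_measurable Theta_M" by (rule Tc_meas)
    show "\<And>x. x \<in> space Theta_M \<Longrightarrow> Tc j x \<in> {0..1}"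
      by (rule Tc_range) (simp only: space_Theta_M)
  qed
  have RM_meas[measurable]: "RM \<in> borel_measurable (Theta_M \<Otimes>\<^sub>M M)"
    unfolding RM_def
  proof (rule measurable_compose_countable'[where I=UNIV and
        f="\<lambda>p q. Ac (fst q) + (\<Sum>j<p. Bc j (fst q) * X (snd q) (Tc j (fst q)))"])
    fix p :: nat
    show "(\<lambda>q. Ac (fst q) + (\<Sum>j<p. Bc j (fst q) * X (snd q) (Tc j (fst q)))) \<in> borel_measurable (Theta_M \<Otimes>\<^sub>M M)"
      using term_meas by measurable
  next
    show "(\<lambda>q. lenT (fst q)) \<in> Theta_M \<Otimes>\<^sub>M M \<rightarrow>\<^sub>M count_space UNIV" by measurable
  qed auto
  define K where "K q = distr std (L2M \<Otimes>\<^sub>M borel)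
      (\<lambda>z. (X (snd q), RM q + sqrt (max 0 (theta_s2 (fst q))) * z))" for q
  have K_meas: "K \<in> Theta_M \<Otimes>\<^sub>M M \<rightarrow>\<^sub>M subprob_algebra (L2M \<Otimes>\<^sub>M borel)"
    unfolding K_def
  proof (rule measurable_distr2[where M=borel])
    show "(\<lambda>q. std) \<in> Theta_M \<Otimes>\<^sub>M M \<rightarrow>\<^sub>M subprob_algebra borel"
      using std_sub by simp
    show "(\<lambda>(q, z). (X (snd q), RM q + sqrt (max 0 (theta_s2 (fst q))) * z))
       \<in> (Theta_M \<Otimes>\<^sub>M M) \<Otimes>\<^sub>M borel \<rightarrow>\<^sub>M L2M \<Otimes>\<^sub>M borel"
      by measurable
  qed
  have K_eq: "distr (gauss (reg_mean th (X w)) (theta_s2 th)) (L2M \<Otimes>\<^sub>M borel) (\<lambda>y. (X w, y)) = K (th, w)"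
    if th: "th \<in> ThetaSet" and w: "w \<in> space M" for th w
  proof -
    have s0: "theta_s2 th \<ge> 0" using th by (auto simp: ThetaSet_def theta_s2_def)
    have Xw: "X w \<in> space L2M" using measurable_space[OF XL w] .
    have "distr (gauss (reg_mean th (X w)) (theta_s2 th)) (L2M \<Otimes>\<^sub>M borel) (\<lambda>y. (X w, y))
        = distr (distr std borel (\<lambda>z. reg_mean th (X w) + sqrt (theta_s2 th) * z)) (L2M \<Otimes>\<^sub>M borel) (\<lambda>y. (X w, y))"
      using gauss_affine[OF s0] unfolding std_def by simp
    also have "\<dots> = distr std (L2M \<Otimes>\<^sub>M borel) ((\<lambda>y. (X w, y)) \<circ> (\<lambda>z. reg_mean th (X w) + sqrt (theta_s2 th) * z))"
      using Xw by (intro distr_distr) (auto simp: std_def)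
    also have "\<dots> = K (th, w)"
      unfolding K_def using s0 reg_mean_eq[OF th] by (simp add: RM_def o_def)
    finally show ?thesis .
  qed
  have em_eq: "emeasure (P_theta M X th) A = (\<integral>\<^sup>+w. emeasure (K (th, w)) A \<partial>M)"
    if th: "th \<in> ThetaSet" for th
  proof -
    have km: "(\<lambda>w. distr (gauss (reg_mean th (X w)) (theta_s2 th)) (L2M \<Otimes>\<^sub>M borel) (\<lambda>y. (X w, y)))
        \<in> M \<rightarrow>\<^sub>M subprob_algebra (L2M \<Otimes>\<^sub>M borel)"
    proof (rule measurable_cong[THEN iffD2])
      show "(\<lambda>w. K (th, w)) \<in> M \<rightarrow>\<^sub>M subprob_algebra (L2M \<Otimes>\<^sub>M borel)"
        using measurable_Pair2[OF K_meas, of th] th by simp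
    qed (rule K_eq[OF th])
    have "emeasure (P_theta M X th) A = (\<integral>\<^sup>+w. emeasure (distr (gauss (reg_mean th (X w)) (theta_s2 th)) (L2M \<Otimes>\<^sub>M borel) (\<lambda>y. (X w, y))) A \<partial>M)"
      unfolding P_theta_def by (rule emeasure_bind[OF P.not_empty km Aset])
    also have "\<dots> = (\<integral>\<^sup>+w. emeasure (K (th, w)) A \<partial>M)"
      by (rule nn_integral_cong) (simp add: K_eq[OF th])
    finally show ?thesis .
  qed
  have F: "(\<lambda>q. emeasure (K q) A) \<in> borel_measurable (Theta_M \<Otimes>\<^sub>M M)"
    using measurable_compose[OF K_meas measurable_emeasure_subprob_algebra[OF Aset]] .
  have "(\<lambda>th. \<integral>\<^sup>+w. emeasure (K (th, w)) A \<partial>M) \<in> borel_measurable Theta_M"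
    by (rule P.borel_measurable_nn_integral) (use F in simp)
  then show ?thesis
    by (rule measurable_cong[THEN iffD1, rotated]) (simp add: em_eq)
qed

end
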